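(* Let $p:(S_1,\le)\to(S_2,\le)$ be a bijective monotone map of posets, and let $\mathbb{B}p:\mathbb{B}(S_1,\le)\to\mathbb{B}(S_2,\le)$ be its $\mathbb{B}$-linear extension. If $\sigma:\mathbb{B}(S_2,\le)\to\mathbb{B}(S_1,\le)$ is a monotone map (for inclusion) with $\mathbb{B}p\circ\sigma=\mathrm{id}$, then $\sigma$ is right adjoint to $\mathbb{B}p$ (i.e. $L\subseteq\sigma(L')$ iff $\mathbb{B}p(L)\subseteq L'$) and $\sigma$ is $\mathbb{B}$-linear.
   Context: $\mathbb{B}=\{-\infty,0\}$ is the Boolean semifield; $\mathbb{B}$-modules are join-semilattices with least element and $\mathbb{B}$-linear maps preserve finite joins. For a poset $(S,\le)$, $\mathbb{B}(S,\le)$ is the set of lower subsets of $S$ that are the downward closure of a finite subset, with operation union and ordered by inclusion. For monotone $p$, $\mathbb{B}p$ sends the downward closure of a finite set $F$ to the downward closure of $p(F)$. *)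

theory Defs
  imports Main
begin

text \<open>A poset (S, \<le>) is represented by a carrier set S inside a type with a
partial order (class order); the order on S is the restriction of that order.\<close>

definition down :: "'a::order set \<Rightarrow> 'a set \<Rightarrow> 'a set" where
  "down S F = {x \<in> S. \<exists>y\<in>F. x \<le> y}"

definition Bmod :: "'a::order set \<Rightarrow> 'a set set" where
  "Bmod S = {L. \<exists>F. finite F \<and> F \<subseteq> S \<and> L = down S F}"

definition Bmap :: "'a::order set \<Rightarrow> 'b::order set \<Rightarrow> ('a \<Rightarrow> 'b) \<Rightarrow> 'a set \<Rightarrow> 'b set" where
  "Bmap S1 S2 p L = down S2 (p ` (SOME F. finite F \<and> F \<subseteq> S1 \<and> L = down S1 F))"

end

theory Submission
  imports Defs
begin

lemma Bmod_sub: "L \<in> Bmod S \<Longrightarrow> L \<subseteq> S"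
  by (auto simp: Bmod_def down_def)

lemma Bmod_lower: "L \<in> Bmod S \<Longrightarrow> y \<in> L \<Longrightarrow> x \<in> S \<Longrightarrow> x \<le> y \<Longrightarrow> x \<in> L"
  by (auto simp: Bmod_def down_def intro: order_trans)

lemma down_in_Bmod: "finite F \<Longrightarrow> F \<subseteq> S \<Longrightarrow> down S F \<in> Bmod S"
  by (auto simp: Bmod_def)

lemma down_img_eq:
  assumes mono_p: "\<forall>x\<in>S1. \<forall>y\<in>S1. x \<le> y \<longrightarrow> p x \<le> p y" and "F \<subseteq> S1"
  shows "down S2 (p ` down S1 F) = down S2 (p ` F)"
  using assms unfolding down_def
  by (auto intro: order_trans) (metis (no_types, lifting) assms(2) order_trans subsetD)+

lemma Bmap_eq:
  assumes mono_p: "\<forall>x\<in>S1. \<forall>y\<in>S1. x \<le> y \<longrightarrow> p x \<le> p y" and L: "L \<in> Bmod S1"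
  shows "Bmap S1 S2 p L = down S2 (p ` L)"
proof -
  let ?G = "SOME F. finite F \<and> F \<subseteq> S1 \<and> L = down S1 F"
  have "\<exists>F. finite F \<and> F \<subseteq> S1 \<and> L = down S1 F" using L by (auto simp: Bmod_def)
  hence G: "finite ?G \<and> ?G \<subseteq> S1 \<and> L = down S1 ?G" by (rule someI_ex)
  have "Bmap S1 S2 p L = down S2 (p ` ?G)" by (simp add: Bmap_def)
  also have "\<dots> = down S2 (p ` down S1 ?G)" using down_img_eq[OF mono_p] G by metis
  also have "\<dots> = down S2 (p ` L)" using G by simp
  finally show ?thesis .
qed

lemma Bmap_in:
  assumes mono_p: "\<forall>x\<in>S1. \<forall>y\<in>S1. x \<le> y \<longrightarrow> p x \<le> p y" and L: "L \<in> Bmod S1"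
    and bij: "bij_betw p S1 S2"
  shows "down S2 (p ` L) \<in> Bmod S2"
proof -
  obtain F where F: "finite F" "F \<subseteq> S1" "L = down S1 F" using L by (auto simp: Bmod_def)
  have "down S2 (p ` L) = down S2 (p ` F)" using down_img_eq[OF mono_p F(2)] F(3) by simp
  moreover have "p ` F \<subseteq> S2" using F(2) bij by (auto simp: bij_betw_def)
  ultimately show ?thesis using F(1) down_in_Bmod[of "p ` F" S2] by simp
qed

theorem mainTheorem8:
  fixes S1 :: "'a::order set" and S2 :: "'b::order set"
    and p :: "'a \<Rightarrow> 'b" and \<sigma> :: "'b set \<Rightarrow> 'a set"
  assumes bij: "bij_betw p S1 S2"
    and mono_p: "\<forall>x\<in>S1. \<forall>y\<in>S1. x \<le> y \<longrightarrow> p x \<le> p y"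
    and \<sigma>_into: "\<forall>L'\<in>Bmod S2. \<sigma> L' \<in> Bmod S1"
    and \<sigma>_mono: "\<forall>L'\<in>Bmod S2. \<forall>M'\<in>Bmod S2. L' \<subseteq> M' \<longrightarrow> \<sigma> L' \<subseteq> \<sigma> M'"
    and sec: "\<forall>L'\<in>Bmod S2. Bmap S1 S2 p (\<sigma> L') = L'"
  shows "(\<forall>L\<in>Bmod S1. \<forall>L'\<in>Bmod S2. (L \<subseteq> \<sigma> L') \<longleftrightarrow> (Bmap S1 S2 p L \<subseteq> L'))
       \<and> \<sigma> {} = {}
       \<and> (\<forall>L'\<in>Bmod S2. \<forall>M'\<in>Bmod S2. \<sigma> (L' \<union> M') = \<sigma> L' \<union> \<sigma> M')"
proof -
  have pS: "\<And>x. x \<in> S1 \<Longrightarrow> p x \<in> S2" using bij by (auto simp: bij_betw_def)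
  have inj: "\<And>x y. x \<in> S1 \<Longrightarrow> y \<in> S1 \<Longrightarrow> p x = p y \<Longrightarrow> x = y"
    using bij by (auto simp: bij_betw_def inj_on_def)
  have Dm: "\<And>x. x \<in> S1 \<Longrightarrow> down S2 {p x} \<in> Bmod S2"
    using pS down_in_Bmod[of "{p x}" S2 for x] by simp
  have key: "\<And>x. x \<in> S1 \<Longrightarrow> x \<in> \<sigma> (down S2 {p x})"
  proof -
    fix x assume x: "x \<in> S1"
    let ?D = "down S2 {p x}"
    have sD: "\<sigma> ?D \<in> Bmod S1" using \<sigma>_into Dm[OF x] by auto
    have "down S2 (p ` \<sigma> ?D) = ?D" using sec Dm[OF x] Bmap_eq[OF mono_p sD] by metis
    moreover have "p x \<in> ?D" using pS[OF x] by (auto simp: down_def)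
    ultimately have "p x \<in> down S2 (p ` \<sigma> ?D)" by simp
    then obtain y where y: "y \<in> \<sigma> ?D" "p x \<le> p y" by (auto simp: down_def)
    have yS: "y \<in> S1" using Bmod_sub[OF sD] y(1) by auto
    have "p y \<in> down S2 (p ` \<sigma> ?D)" using y(1) pS[OF yS] by (auto simp: down_def)
    hence "p y \<le> p x" using \<open>down S2 (p ` \<sigma> ?D) = ?D\<close> by (auto simp: down_def)
    hence "p x = p y" using y(2) by simp
    hence "x = y" using inj x yS by auto
    thus "x \<in> \<sigma> ?D" using y(1) by simp
  qed
  have A: "\<forall>L\<in>Bmod S1. \<forall>L'\<in>Bmod S2. (L \<subseteq> \<sigma> L') \<longleftrightarrow> (Bmap S1 S2 p L \<subseteq> L')"
  proof (intro ballI iffI)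
    fix L L' assume L: "L \<in> Bmod S1" and L': "L' \<in> Bmod S2"
    have sL: "\<sigma> L' \<in> Bmod S1" using \<sigma>_into L' by auto
    {
      assume "L \<subseteq> \<sigma> L'"
      hence "down S2 (p ` L) \<subseteq> down S2 (p ` \<sigma> L')" by (auto simp: down_def)
      thus "Bmap S1 S2 p L \<subseteq> L'" using Bmap_eq[OF mono_p L] Bmap_eq[OF mono_p sL] sec L' by metis
    }
    {
      assume h: "Bmap S1 S2 p L \<subseteq> L'"
      show "L \<subseteq> \<sigma> L'"
      proof
        fix x assume xL: "x \<in> L"
        have x: "x \<in> S1" using Bmod_sub[OF L] xL by auto
        have "down S2 {p x} \<subseteq> L'"
        proof
          fix z assume "z \<in> down S2 {p x}"
          hence z: "z \<in> S2" "z \<le> p x" by (auto simp: down_def)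
          have "p x \<in> L'" using h Bmap_eq[OF mono_p L] xL pS[OF x] by (auto simp: down_def)
          thus "z \<in> L'" using Bmod_lower[OF L'] z by blast
        qed
        hence "\<sigma> (down S2 {p x}) \<subseteq> \<sigma> L'" using \<sigma>_mono Dm[OF x] L' by blast
        thus "x \<in> \<sigma> L'" using key[OF x] by auto
      qed
    }
  qed
  have E: "{} \<in> Bmod S2" using down_in_Bmod[of "{}" S2] by (simp add: down_def)
  have B: "\<sigma> {} = {}"
  proof -
    have sE: "\<sigma> {} \<in> Bmod S1" using \<sigma>_into E by auto
    have "down S2 (p ` \<sigma> {}) = {}" using sec E Bmap_eq[OF mono_p sE] by metis
    thus ?thesis using Bmod_sub[OF sE] pS by (auto simp: down_def)
  qed
  have C: "\<forall>L'\<in>Bmod S2. \<forall>M'\<in>Bmod S2. \<sigma> (L' \<union> M') = \<sigma> L' \<union> \<sigma> M'"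
  proof (intro ballI)
    fix L' M' assume L': "L' \<in> Bmod S2" and M': "M' \<in> Bmod S2"
    have U: "L' \<union> M' \<in> Bmod S2"
    proof -
      obtain F where "finite F" "F \<subseteq> S2" "L' = down S2 F" using L' by (auto simp: Bmod_def)
      moreover obtain G where "finite G" "G \<subseteq> S2" "M' = down S2 G" using M' by (auto simp: Bmod_def)
      ultimately have "L' \<union> M' = down S2 (F \<union> G)" "finite (F \<union> G)" "F \<union> G \<subseteq> S2"
        by (auto simp: down_def)
      thus ?thesis using down_in_Bmod by metis
    qed
    have sU: "\<sigma> (L' \<union> M') \<in> Bmod S1" using \<sigma>_into U by auto
    have "\<sigma> (L' \<union> M') \<subseteq> \<sigma> L' \<union> \<sigma> M'"
    proof
      fix x assume xU: "x \<in> \<sigma> (L' \<union> M')"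
      have x: "x \<in> S1" using Bmod_sub[OF sU] xU by auto
      have "p x \<in> down S2 (p ` \<sigma> (L' \<union> M'))" using xU pS[OF x] by (auto simp: down_def)
      hence px: "p x \<in> L' \<union> M'" using sec U Bmap_eq[OF mono_p sU] by metis
      have low: "\<And>N. N \<in> Bmod S2 \<Longrightarrow> p x \<in> N \<Longrightarrow> x \<in> \<sigma> N"
      proof -
        fix N assume N: "N \<in> Bmod S2" and pN: "p x \<in> N"
        have "down S2 {p x} \<subseteq> N" using Bmod_lower[OF N pN] by (auto simp: down_def)
        hence "\<sigma> (down S2 {p x}) \<subseteq> \<sigma> N" using \<sigma>_mono Dm[OF x] N by blast
        thus "x \<in> \<sigma> N" using key[OF x] by auto
      qed
      show "x \<in> \<sigma> L' \<union> \<sigma> M'" using px low L' M' by blast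
    qed
    moreover have "\<sigma> L' \<union> \<sigma> M' \<subseteq> \<sigma> (L' \<union> M')" using \<sigma>_mono L' M' U by blast
    ultimately show "\<sigma> (L' \<union> M') = \<sigma> L' \<union> \<sigma> M'" by blast
  qed
  show ?thesis using A B C by blast
qed

end
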